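(* Let $\mathfrak{R}$ be an alternative ring with a nontrivial idempotent $e_1$ and Peirce decomposition $\mathfrak{R}=\mathfrak{R}_{11}\oplus\mathfrak{R}_{12}\oplus\mathfrak{R}_{21}\oplus\mathfrak{R}_{22}$, satisfying: (i) if $a_{11}\in\mathfrak{R}_{11}$, $a_{22}\in\mathfrak{R}_{22}$ and $[a_{11}+a_{22},\mathfrak{R}_{12}]=0$, then $a_{11}+a_{22}\in\mathcal{Z}(\mathfrak{R})$; (ii) if $a_{11}\in\mathfrak{R}_{11}$, $a_{22}\in\mathfrak{R}_{22}$ and $[a_{11}+a_{22},\mathfrak{R}_{21}]=0$, then $a_{11}+a_{22}\in\mathcal{Z}(\mathfrak{R})$. Let $\mathcal{D}$ be a multiplicative Lie-type derivation of $\mathfrak{R}$. Then for any $a_{11}\in\mathfrak{R}_{11}$ and $b_{ij}\in\mathfrak{R}_{ij}$ with $i\neq j$ there exists $z_{a_{11},b_{ij}}\in\mathcal{Z}(\mathfrak{R})$ such that $\mathcal{D}(a_{11}+b_{ij})=\mathcal{D}(a_{11})+\mathcal{D}(b_{ij})+z_{a_{11},b_{ij}}$.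
   Context: Rings are not assumed associative or unital. The associator is $(x,y,z)=(xy)z-x(yz)$; $\mathfrak{R}$ is alternative if $(x,x,y)=0=(y,x,x)$ for all $x,y$. $[x,y]=xy-yx$ and $\mathcal{Z}(\mathfrak{R})=\{r: [r,x]=0\ \forall x\in\mathfrak{R}\}$. Define $p_1(x)=x$, $p_n(x_1,\dots,x_n)=[p_{n-1}(x_1,\dots,x_{n-1}),x_n]$. For $n\ge2$, a (not necessarily additive) map $\mathcal{D}\colon\mathfrak{R}\to\mathfrak{R}$ is a multiplicative Lie $n$-derivation if $\mathcal{D}(p_n(x_1,\dots,x_n))=\sum_{i=1}^n p_n(x_1,\dots,\mathcal{D}(x_i),\dots,x_n)$ for all $x_i\in\mathfrak{R}$; a multiplicative Lie-type derivation is a multiplicative Lie $n$-derivation for some $n\ge2$. A nontrivial idempotent is $e_1\ne0$ with $e_1^2=e_1$ which is not a multiplicative identity. With $e_2a:=a-e_1a$, $ae_2:=a-ae_1$, set $\mathfrak{R}_{ij}=e_i\mathfrak{R}e_j$ ($i,j=1,2$), so $\mathfrak{R}=\bigoplus_{i,j}\mathfrak{R}_{ij}$. *)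

theory Defs
  imports Main
begin

class nonassoc_ring = ab_group_add + times +
  assumes na_distrib_right: "(a + b) * c = a * c + b * c"
  and na_distrib_left: "a * (b + c) = a * b + a * c"

class alternative_ring = nonassoc_ring +
  assumes left_alternative: "(x * x) * y = x * (x * y)"
  and right_alternative: "(y * x) * x = y * (x * x)"

definition associator :: "'a::{times,minus} \<Rightarrow> 'a \<Rightarrow> 'a \<Rightarrow> 'a" where
  "associator x y z = (x * y) * z - x * (y * z)"

definition commutator :: "'a::{times,minus} \<Rightarrow> 'a \<Rightarrow> 'a" where
  "commutator x y = x * y - y * x"

definition center :: "'a::{times,minus,zero} set" where
  "center = {r. \<forall>x. commutator r x = 0}"

text \<open>Lie polynomials, 0-indexed: lie_poly k x = p_{k+1}(x 0, ..., x k).\<close>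
fun lie_poly :: "nat \<Rightarrow> (nat \<Rightarrow> 'a::{times,minus}) \<Rightarrow> 'a" where
  "lie_poly 0 x = x 0"
| "lie_poly (Suc k) x = commutator (lie_poly k x) (x (Suc k))"

text \<open>Multiplicative Lie n-derivation (not assumed additive); the arguments
x_1..x_n are x 0, ..., x (n-1).\<close>
definition mult_lie_n_derivation :: "nat \<Rightarrow> ('a::nonassoc_ring \<Rightarrow> 'a) \<Rightarrow> bool" where
  "mult_lie_n_derivation n D \<longleftrightarrow>
     (\<forall>x. D (lie_poly (n - 1) x) = (\<Sum>i<n. lie_poly (n - 1) (x(i := D (x i)))))"

definition mult_lie_type_derivation :: "('a::nonassoc_ring \<Rightarrow> 'a) \<Rightarrow> bool" where
  "mult_lie_type_derivation D \<longleftrightarrow> (\<exists>n\<ge>2. mult_lie_n_derivation n D)"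

definition nontrivial_idempotent :: "'a::nonassoc_ring \<Rightarrow> bool" where
  "nontrivial_idempotent e \<longleftrightarrow> e \<noteq> 0 \<and> e * e = e \<and> \<not> (\<forall>x. e * x = x \<and> x * e = x)"

text \<open>e_i a and a e_j for i,j in {1,2}, with e_2 a = a - e_1 a, a e_2 = a - a e_1.\<close>
definition lmul_e :: "'a::nonassoc_ring \<Rightarrow> nat \<Rightarrow> 'a \<Rightarrow> 'a" where
  "lmul_e e i a = (if i = 1 then e * a else a - e * a)"

definition rmul_e :: "'a::nonassoc_ring \<Rightarrow> nat \<Rightarrow> 'a \<Rightarrow> 'a" where
  "rmul_e e j a = (if j = 1 then a * e else a - a * e)"

definition peirce :: "'a::nonassoc_ring \<Rightarrow> nat \<Rightarrow> nat \<Rightarrow> 'a set" where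
  "peirce e i j = {rmul_e e j (lmul_e e i a) | a. True}"

end

theory Submission imports Defs begin

lemma na_zero_left[simp]: "0 * (a::'a::nonassoc_ring) = 0"
proof -
  have "0 * a = (0 + 0) * a" by simp
  also have "\<dots> = 0 * a + 0 * a" by (rule na_distrib_right)
  finally show ?thesis by simp
qed
lemma na_zero_right[simp]: "(a::'a::nonassoc_ring) * 0 = 0"
proof -
  have "a * 0 = a * (0 + 0)" by simp
  also have "\<dots> = a * 0 + a * 0" by (rule na_distrib_left)
  finally show ?thesis by simp
qed
lemma na_minus_left: "(- a) * b = - ((a::'a::nonassoc_ring) * b)"
proof -
  have "(- a) * b + a * b = (- a + a) * b" by (rule na_distrib_right[symmetric])
  also have "\<dots> = 0" by simp
  finally show ?thesis by (simp add: eq_neg_iff_add_eq_0)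
qed
lemma na_minus_right: "(a::'a::nonassoc_ring) * (- b) = - (a * b)"
proof -
  have "a * (- b) + a * b = a * (- b + b)" by (rule na_distrib_left[symmetric])
  also have "\<dots> = 0" by simp
  finally show ?thesis by (simp add: eq_neg_iff_add_eq_0)
qed
lemma na_diff_right: "(a - b) * c = a * c - (b::'a::nonassoc_ring) * c"
  by (simp only: diff_conv_add_uminus na_distrib_right na_minus_left)
lemma na_diff_left: "(a::'a::nonassoc_ring) * (b - c) = a * b - a * c"
  by (simp only: diff_conv_add_uminus na_distrib_left na_minus_right)
lemmas na_expand = na_distrib_left na_distrib_right na_diff_left na_diff_right na_minus_left na_minus_right

lemma as_L: "associator x x (y::'a::alternative_ring) = 0" by (simp add: associator_def left_alternative)
lemma as_R: "associator y x (x::'a::alternative_ring) = 0" by (simp add: associator_def right_alternative)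
lemma as_l: "associator x y z + associator y x (z::'a::alternative_ring) = 0"
proof -
  have "associator (x+y) (x+y) z = 0" by (rule as_L)
  thus ?thesis using as_L[of x z] as_L[of y z]
    by (simp add: associator_def na_expand algebra_simps)
qed
lemma as_r: "associator z x y + associator z y (x::'a::alternative_ring) = 0"
proof -
  have "associator z (x+y) (x+y) = 0" by (rule as_R)
  thus ?thesis using as_R[of z x] as_R[of z y]
    by (simp add: associator_def na_expand algebra_simps)
qed

lemma as_F: "associator x y (x::'a::alternative_ring) = 0"
  using as_r[of x x y] as_L[of x y] by simp

lemma moufang_left: "((x * y) * x) * z = x * (y * (x * (z::'a::alternative_ring)))"
proof -
  have "((x * y) * x) * z - x * (y * (x * z)) = (associator y x (x * z) + associator x y (x * z)) - (associator (x * x) y z + associator (x * x) z y) - associator x x (y * z) + (associator x x y * z) + (x * (associator x y z + associator x z y)) + (associator (x * y) x z + associator x (x * y) z) + (associator (x * z) x y + associator x (x * z) y) + (associator (x * z) y x + associator y (x * z) x) - (associator (x * z) x y + associator (x * z) y x) - (associator y (x * z) x + associator y x (x * z)) - associator x x (z * y) + (associator x x z * y)"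
    by (simp add: associator_def na_expand algebra_simps)
  also have "\<dots> = 0" by (simp only: as_l as_r as_L as_R as_F na_zero_left na_zero_right add_0_left add_0_right diff_0_right diff_0 neg_0_equal_iff_equal diff_self)
  finally show ?thesis by simp
qed

lemma moufang_right: "z * ((x * y) * x) = ((z * x) * y) * (x::'a::alternative_ring)"
proof -
  have "z * ((x * y) * x) - ((z * x) * y) * x = 0 - (z * (associator x x y + associator x y x)) - (z * (associator x x y + associator x y x)) - (z * (associator x y x + associator y x x)) + (associator z y (x * x) + associator z (x * x) y) + (associator z y (x * x) + associator z (x * x) y) + (associator z y (x * x) + associator z (x * x) y) - (associator z (x * y) x + associator z x (x * y)) - (associator z (x * y) x + associator z x (x * y)) - (associator z (x * y) x + associator z x (x * y)) + (associator z (y * x) x + associator z x (y * x)) - ((associator x z y + associator x y z) * x) - (x * (associator x z y + associator x y z)) - (x * (associator x z y + associator x y z)) - (x * (associator x z y + associator x y z)) + (associator x x (y * z) + associator x (y * z) x) + (associator x x (y * z) + associator x (y * z) x) + (associator x x (y * z) + associator x (y * z) x) - (associator x z (x * y) + associator x (x * y) z) - (associator x z (x * y) + associator x (x * y) z) - (associator x z (x * y) + associator x (x * y) z) + (associator (x * x) z y + associator (x * x) y z) + (associator (x * x) z y + associator (x * x) y z) + (associator (x * x) z y + associator (x * x) y z) - (associator (z * x) x y + associator x (z * x) y) + (x * (associator z y x + associator y z x)) + (associator x (z * x) y + associator x y (z * x)) - (associator z (x * y) x + associator (x * y) z x) + (x * (associator z x y + associator x z y)) + (x * (associator z x y + associator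 x z y)) + (x * (associator z x y + associator x z y)) - (associator z (x * x) y + associator (x * x) z y) - (associator z (x * x) y + associator (x * x) z y) - (associator z (x * x) y + associator (x * x) z y) - (x * (associator z x y + associator z y x)) - (x * (associator z x y + associator z y x)) - (x * (associator z x y + associator z y x)) + (associator z x (x * y) + associator x z (x * y)) + (associator z x (x * y) + associator x z (x * y)) + (associator z x (x * y) + associator x z (x * y)) - ((associator z x y + associator x z y) * x) - (associator x x y * z) - (associator x x y * z) - (associator x x y * z) + (associator (z * x) x y + associator (z * x) y x) + associator x x (z * y) + associator x x (z * y) + associator x x (z * y) - (associator x x (z * y) + associator x (z * y) x) - (associator x x (z * y) + associator x (z * y) x) - (associator x x (z * y) + associator x (z * y) x) + (associator (z * y) x x + associator x (z * y) x) + (z * associator x x y) + (z * associator x x y) + (y * (associator z x x + associator x z x)) + (y * (associator z x x + associator x z x)) - (associator x y (z * x) + associator y x (z * x)) - (associator x y (z * x) + associator y x (z * x)) - (associator z y (x * x) + associator y z (x * x)) - (associator z y (x * x) + associator y z (x * x)) + (associator (x * z) y x + associator y (x * z) x) + (associator (x * z) y x + associator y (x * z) x) + (associator (z * x) y x + associator y (z * x) x) + (associator (z * x) y x + associator y (z * x) x) - (associator (y * z) x x + associator x (y * z) x) - (associator (y * z) x x + associator x (y * z) x) + (associator z x (y * x) + associator x z (y * x)) + (associator z x (y * x) + associator x z (y * x)) - (associator z (y * x) x + associator (y * x) z x) - (associator z (y * x) x + associator (y * x) z x) + ((associator x y z + associator y x z) * x) + ((associator x y z + associator y x z) * x) + ((associator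 z y x + associator y z x) * x) + ((associator z y x + associator y z x) * x) - ((associator z x y + associator z y x) * x) - ((associator z x y + associator z y x) * x) - ((associator z x y + associator z y x) * x)"
    by (simp add: associator_def na_expand algebra_simps)
  also have "\<dots> = 0" by (simp only: as_l as_r as_L as_R as_F na_zero_left na_zero_right add_0_left add_0_right diff_0_right diff_0 neg_0_equal_iff_equal diff_self)
  finally show ?thesis by simp
qed

lemma flex: "(x * y) * x = x * (y * (x::'a::alternative_ring))"
  using as_F[of x y] by (simp add: associator_def)

lemma comm_add_left: "commutator (a + b) c = commutator a c + commutator (b::'a::nonassoc_ring) c"
  by (simp add: commutator_def na_expand algebra_simps)
lemma comm_diff_left: "commutator (a - b) c = commutator a c - commutator (b::'a::nonassoc_ring) c"
  by (simp add: commutator_def na_expand algebra_simps)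
lemma comm_minus_left: "commutator (- a) c = - commutator (a::'a::nonassoc_ring) c"
  by (simp add: commutator_def na_expand algebra_simps)
lemma comm_zero_left[simp]: "commutator 0 (c::'a::nonassoc_ring) = 0"
  by (simp add: commutator_def)
lemma comm_zero_right[simp]: "commutator (c::'a::nonassoc_ring) 0 = 0"
  by (simp add: commutator_def)

section \<open>Peirce spaces\<close>

lemma eea: "e * e = e \<Longrightarrow> e * (e * a) = e * (a::'a::alternative_ring)"
  by (metis left_alternative)
lemma aee: "e * e = e \<Longrightarrow> (a * e) * e = (a::'a::alternative_ring) * e"
  by (metis right_alternative)

lemma P11_iff:
  assumes "e * e = (e::'a::alternative_ring)"
  shows "x \<in> peirce e 1 1 \<longleftrightarrow> e * x = x \<and> x * e = x"
proof
  assume "x \<in> peirce e 1 1"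
  then obtain a where x: "x = (e * a) * e" by (auto simp: peirce_def rmul_e_def lmul_e_def)
  have f: "(e * a) * e = e * (a * e)" by (rule flex)
  have "e * x = e * (e * (a * e))" using x f by simp
  also have "\<dots> = e * (a * e)" using eea[OF assms] by simp
  finally have 1: "e * x = x" using x f by simp
  have "x * e = (e * a) * e" using x aee[OF assms] by simp
  thus "e * x = x \<and> x * e = x" using 1 x by simp
next
  assume "e * x = x \<and> x * e = x"
  thus "x \<in> peirce e 1 1" unfolding peirce_def rmul_e_def lmul_e_def
    by (intro CollectI exI[of _ x]) simp
qed

lemma P12_iff:
  assumes "e * e = (e::'a::alternative_ring)"
  shows "x \<in> peirce e 1 2 \<longleftrightarrow> e * x = x \<and> x * e = 0"
proof
  assume "x \<in> peirce e 1 2"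
  then obtain a where x: "x = e * a - (e * a) * e" by (auto simp: peirce_def rmul_e_def lmul_e_def)
  have f: "(e * a) * e = e * (a * e)" by (rule flex)
  have g: "e * ((e * a) * e) = (e * a) * e" using f eea[OF assms, of "a * e"] by simp
  have "e * x = x" using x g eea[OF assms, of a] by (simp add: na_expand)
  moreover have "x * e = 0" using x aee[OF assms, of "e * a"] by (simp add: na_expand)
  ultimately show "e * x = x \<and> x * e = 0" by simp
next
  assume "e * x = x \<and> x * e = 0"
  thus "x \<in> peirce e 1 2" unfolding peirce_def rmul_e_def lmul_e_def
    by (intro CollectI exI[of _ x]) simp
qed

lemma P21_iff:
  assumes "e * e = (e::'a::alternative_ring)"
  shows "x \<in> peirce e 2 1 \<longleftrightarrow> e * x = 0 \<and> x * e = x"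
proof
  assume "x \<in> peirce e 2 1"
  then obtain a where x: "x = (a - e * a) * e" by (auto simp: peirce_def rmul_e_def lmul_e_def)
  have f: "(e * a) * e = e * (a * e)" by (rule flex)
  have g: "e * ((e * a) * e) = (e * a) * e" using f eea[OF assms, of "a * e"] by simp
  have "e * x = 0" using x g f by (simp add: na_expand)
  moreover have "x * e = x" using x aee[OF assms, of "e * a"] aee[OF assms, of a] by (simp add: na_expand)
  ultimately show "e * x = 0 \<and> x * e = x" by simp
next
  assume "e * x = 0 \<and> x * e = x"
  thus "x \<in> peirce e 2 1" unfolding peirce_def rmul_e_def lmul_e_def
    by (intro CollectI exI[of _ x]) simp
qed

lemma P22_iff:
  assumes "e * e = (e::'a::alternative_ring)"
  shows "x \<in> peirce e 2 2 \<longleftrightarrow> e * x = 0 \<and> x * e = 0"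
proof
  assume "x \<in> peirce e 2 2"
  then obtain a where x: "x = (a - e * a) - (a - e * a) * e" by (auto simp: peirce_def rmul_e_def lmul_e_def)
  have f: "(e * a) * e = e * (a * e)" by (rule flex)
  have g: "e * ((e * a) * e) = (e * a) * e" using f eea[OF assms, of "a * e"] by simp
  have "e * x = 0" using x g f eea[OF assms, of a] by (simp add: na_expand)
  moreover have "x * e = 0" using x aee[OF assms, of "e * a"] aee[OF assms, of a] by (simp add: na_expand)
  ultimately show "e * x = 0 \<and> x * e = 0" by simp
next
  assume "e * x = 0 \<and> x * e = 0"
  thus "x \<in> peirce e 2 2" unfolding peirce_def rmul_e_def lmul_e_def
    by (intro CollectI exI[of _ x]) simp
qed


section \<open>Peirce products\<close>

lemma prodA:
  fixes u v e :: "'a::alternative_ring"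
  assumes "e * u = u" "u * e = 0" "e * v = 0" "v * e = v"
  shows "e * (u * v) = u * v \<and> (u * v) * e = u * v \<and> e * (v * u) = 0 \<and> (v * u) * e = 0"
proof -
  have 1: "associator e u v + associator u e v = 0" by (rule as_l)
  have 2: "associator u v e + associator u e v = 0" by (rule as_r)
  have 3: "associator e v u + associator v e u = 0" by (rule as_l)
  have 4: "associator v u e + associator v e u = 0" by (rule as_r)
  show ?thesis using 1 2 3 4 assms by (simp add: associator_def)
qed

lemma prod_11_12:
  fixes a c e :: "'a::alternative_ring"
  assumes "e * a = a" "a * e = a" "e * c = c" "c * e = 0"
  shows "e * (a * c) = a * c \<and> (a * c) * e = 0"
proof -
  have 1: "associator e a c + associator a e c = 0" by (rule as_l)
  have 2: "associator a c e + associator a e c = 0" by (rule as_r)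
  show ?thesis using 1 2 assms by (simp add: associator_def)
qed

lemma prod_21_11:
  fixes a c e :: "'a::alternative_ring"
  assumes "e * a = a" "a * e = a" "e * c = 0" "c * e = c"
  shows "e * (c * a) = 0 \<and> (c * a) * e = c * a"
proof -
  have 1: "associator e c a + associator c e a = 0" by (rule as_l)
  have 2: "associator c a e + associator c e a = 0" by (rule as_r)
  show ?thesis using 1 2 assms by (simp add: associator_def)
qed

lemma prod_22_21:
  fixes d c e :: "'a::alternative_ring"
  assumes "e * d = 0" "d * e = 0" "e * c = 0" "c * e = c"
  shows "e * (d * c) = 0 \<and> (d * c) * e = d * c"
proof -
  have 1: "associator e d c + associator d e c = 0" by (rule as_l)
  have 2: "associator d c e + associator d e c = 0" by (rule as_r)
  show ?thesis using 1 2 assms by (simp add: associator_def)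
qed

lemma prod_12_22:
  fixes d c e :: "'a::alternative_ring"
  assumes "e * d = 0" "d * e = 0" "e * c = c" "c * e = 0"
  shows "e * (c * d) = c * d \<and> (c * d) * e = 0"
proof -
  have 1: "associator e c d + associator c e d = 0" by (rule as_l)
  have 2: "associator c d e + associator c e d = 0" by (rule as_r)
  show ?thesis using 1 2 assms by (simp add: associator_def)
qed

lemma zero_11_21:
  fixes a c e :: "'a::alternative_ring"
  assumes "e * a = a" "a * e = a" "e * c = 0"
  shows "a * c = 0"
  using moufang_left[of e a c] assms by simp

lemma zero_12_11:
  fixes a c e :: "'a::alternative_ring"
  assumes "e * a = a" "a * e = a" "c * e = 0"
  shows "c * a = 0"
  using moufang_right[of c e a] assms by simp

lemma zero_22_12:
  fixes d c e :: "'a::alternative_ring"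
  assumes "e * d = 0" "d * e = 0" "e * c = c"
  shows "d * c = 0"
proof -
  have 1: "associator d e c + associator e d c = 0" by (rule as_l)
  have 2: "e * (d * c) = 0" using moufang_left[of e d c] assms by simp
  show ?thesis using 1 2 assms by (simp add: associator_def)
qed

lemma zero_21_22:
  fixes d c e :: "'a::alternative_ring"
  assumes "e * d = 0" "d * e = 0" "c * e = c"
  shows "c * d = 0"
proof -
  have 1: "associator c e d + associator c d e = 0" by (rule as_r)
  have 2: "(c * d) * e = 0" using moufang_right[of c e d] assms by simp
  show ?thesis using 1 2 assms by (simp add: associator_def)
qed


section \<open>Lie polynomials\<close>

lemma lie_add0:
  "lie_poly k (w(0 := a + b)) = lie_poly k (w(0 := a)) + lie_poly k (w(0 := (b::'a::nonassoc_ring)))"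
  by (induction k) (simp_all add: comm_add_left)

lemma lie_diff0:
  "lie_poly k (w(0 := a - b)) = lie_poly k (w(0 := a)) - lie_poly k (w(0 := (b::'a::nonassoc_ring)))"
  by (induction k) (simp_all add: comm_diff_left)

lemma lie_zero_at:
  "j \<le> k \<Longrightarrow> w j = (0::'a::nonassoc_ring) \<Longrightarrow> lie_poly k w = 0"
proof (induction k)
  case 0 then show ?case by simp
next
  case (Suc k)
  show ?case
  proof (cases "j = Suc k")
    case True then show ?thesis using Suc.prems by simp
  next
    case False then have "j \<le> k" using Suc.prems by simp
    then show ?thesis using Suc by simp
  qed
qed

lemma lie_zero_mono:
  "lie_poly j w = (0::'a::nonassoc_ring) \<Longrightarrow> j \<le> k \<Longrightarrow> lie_poly k w = 0"
proof (induction k)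
  case 0 then show ?case by simp
next
  case (Suc k)
  show ?case
  proof (cases "j = Suc k")
    case True then show ?thesis using Suc.prems by simp
  next
    case False then have "j \<le> k" using Suc.prems by simp
    then show ?thesis using Suc by simp
  qed
qed

definition LD :: "nat \<Rightarrow> ('a::nonassoc_ring \<Rightarrow> 'a) \<Rightarrow> bool" where
  "LD m D \<longleftrightarrow> (\<forall>x. D (lie_poly m x) = (\<Sum>i<Suc m. lie_poly m (x(i := D (x i)))))"

lemma LD_from: "mult_lie_n_derivation n D \<Longrightarrow> n \<ge> 2 \<Longrightarrow> LD (n - 1) D"
proof -
  assume a: "mult_lie_n_derivation n D" "n \<ge> 2"
  have "Suc (n - 1) = n" using a(2) by simp
  thus ?thesis using a(1) unfolding mult_lie_n_derivation_def LD_def by simp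
qed

lemma LD1_comm:
  assumes "LD 1 (D::'a::nonassoc_ring \<Rightarrow> 'a)"
  shows "D (commutator u v) = commutator (D u) v + commutator u (D v)"
proof -
  have "D (lie_poly 1 ((\<lambda>_. v)(0 := u))) = (\<Sum>i<Suc 1. lie_poly 1 (((\<lambda>_. v)(0 := u))(i := D (((\<lambda>_. v)(0 := u)) i))))"
    using assms unfolding LD_def by blast
  thus ?thesis by (simp add: lessThan_Suc)
qed

lemma LD1_LD2:
  assumes "LD 1 (D::'a::nonassoc_ring \<Rightarrow> 'a)"
  shows "LD 2 D"
  unfolding LD_def
proof
  fix x :: "nat \<Rightarrow> 'a"
  have "D (lie_poly 2 x) = D (commutator (commutator (x 0) (x 1)) (x 2))"
    by (simp add: numeral_2_eq_2)
  also have "\<dots> = commutator (commutator (D (x 0)) (x 1)) (x 2) + commutator (commutator (x 0) (D (x 1))) (x 2)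
      + commutator (commutator (x 0) (x 1)) (D (x 2))"
    by (simp add: LD1_comm[OF assms] comm_add_left)
  also have "\<dots> = (\<Sum>i<Suc 2. lie_poly 2 (x(i := D (x i))))"
    by (simp add: lessThan_Suc numeral_2_eq_2 add.commute add.left_commute)
  finally show "D (lie_poly 2 x) = (\<Sum>i<Suc 2. lie_poly 2 (x(i := D (x i))))" .
qed

lemma LD_D0:
  assumes "LD m (D::'a::nonassoc_ring \<Rightarrow> 'a)" "1 \<le> m"
  shows "D 0 = 0"
proof -
  have "D (lie_poly m (\<lambda>_. 0)) = (\<Sum>i<Suc m. lie_poly m ((\<lambda>_. 0)(i := D 0)))"
    using assms unfolding LD_def by auto
  also have "\<dots> = 0"
  proof (rule sum.neutral, rule ballI)
    fix i assume "i \<in> {..<Suc m}"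
    show "lie_poly m ((\<lambda>_. 0)(i := D 0)) = 0"
    proof (cases "i = 0")
      case True then show ?thesis using assms(2) by (intro lie_zero_at[of 1]) auto
    next
      case False then show ?thesis by (intro lie_zero_at[of 0]) auto
    qed
  qed
  finally have "D (lie_poly m (\<lambda>_. 0)) = 0" .
  moreover have "lie_poly m (\<lambda>_. 0) = (0::'a)" by (rule lie_zero_at[of 0]) auto
  ultimately show ?thesis by metis
qed

lemma LD_key:
  assumes LD: "LD m (D::'a::nonassoc_ring \<Rightarrow> 'a)" and m: "1 \<le> m"
    and z: "lie_poly m (y(0 := a)) = 0"
  shows "lie_poly m (y(0 := D (a + b) - D a - D b)) = 0"
proof -
  define L where "L u = lie_poly m (y(0 := u))" for u
  define S where "S u = (\<Sum>j<m. lie_poly m ((y(Suc j := D (y (Suc j))))(0 := u)))" for u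
  have exp: "D (L u) = L (D u) + S u" for u
  proof -
    have "D (L u) = (\<Sum>i<Suc m. lie_poly m ((y(0 := u))(i := D ((y(0 := u)) i))))"
      using LD unfolding LD_def L_def by blast
    also have "\<dots> = L (D u) + S u"
      unfolding sum.lessThan_Suc_shift L_def S_def
      by (simp add: fun_upd_twist)
    finally show ?thesis .
  qed
  have Sadd: "S (u + v) = S u + S v" for u v
    unfolding S_def by (simp add: lie_add0 sum.distrib)
  have Ladd: "L (u + v) = L u + L v" for u v unfolding L_def by (rule lie_add0)
  have Ldiff: "L (u - v) = L u - L v" for u v unfolding L_def by (rule lie_diff0)
  have D0: "D 0 = 0" by (rule LD_D0[OF LD m])
  have La: "L a = 0" using z unfolding L_def .
  have "L (a + b) = L b" using Ladd La by simp
  hence "L (D (a + b)) + S (a + b) = L (D b) + S b" using exp[of "a + b"] exp[of b] by simp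
  hence h1: "L (D (a + b)) + S a = L (D b)" using Sadd[of a b] by (simp add: add.assoc[symmetric])
  have "0 = L (D a) + S a" using exp[of a] La D0 by simp
  hence h2: "S a = - L (D a)" by (simp add: eq_neg_iff_add_eq_0 add.commute)
  have "L (D (a + b)) - L (D a) - L (D b) = 0" using h1 h2 by simp
  thus ?thesis using Ldiff unfolding L_def by simp
qed


lemma step1:
  fixes e T :: "'a::alternative_ring"
  assumes ee: "e * e = e" and m: "1 \<le> m" and z: "lie_poly m ((\<lambda>_. e)(0 := T)) = 0"
  shows "e * T - (e * T) * e = 0 \<and> T * e - (e * T) * e = 0"
proof -
  define t12 where "t12 = e * T - (e * T) * e"
  define t21 where "t21 = T * e - (e * T) * e"
  have "t12 \<in> peirce e 1 2" unfolding t12_def peirce_def rmul_e_def lmul_e_def by auto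
  hence p12: "e * t12 = t12" "t12 * e = 0" using P12_iff[OF ee] by auto
  have "t21 = (T - e * T) * e" unfolding t21_def by (simp add: na_expand)
  hence "t21 \<in> peirce e 2 1" unfolding peirce_def rmul_e_def lmul_e_def by auto
  hence p21: "e * t21 = 0" "t21 * e = t21" using P21_iff[OF ee] by auto
  define w :: "nat \<Rightarrow> 'a" where "w = (\<lambda>_. e)(0 := T)"
  have c: "1 \<le> k \<Longrightarrow> lie_poly k w = t21 - t12 \<or> lie_poly k w = t21 + t12" for k
  proof (induction k)
    case 0 then show ?case by simp
  next
    case (Suc k)
    show ?case
    proof (cases "k = 0")
      case True
      then show ?thesis unfolding w_def t21_def t12_def by (simp add: commutator_def algebra_simps)
    next
      case False
      then have "lie_poly k w = t21 - t12 \<or> lie_poly k w = t21 + t12" using Suc.IH by simp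
      moreover have "commutator (t21 - t12) e = t21 + t12"
        using p12 p21 by (simp add: commutator_def na_expand)
      moreover have "commutator (t21 + t12) e = t21 - t12"
        using p12 p21 by (simp add: commutator_def na_expand)
      moreover have "w (Suc k) = e" unfolding w_def by simp
      ultimately show ?thesis by auto
    qed
  qed
  have "t21 - t12 = 0 \<or> t21 + t12 = 0" using c[OF m] z unfolding w_def by auto
  hence "e * (t21 - t12) = 0 \<or> e * (t21 + t12) = 0" by auto
  hence "t12 = 0" using p12 p21 by (auto simp: na_expand)
  moreover have "t21 = 0" using \<open>t21 - t12 = 0 \<or> t21 + t12 = 0\<close> calculation by auto
  ultimately show ?thesis unfolding t12_def t21_def by simp
qed

lemma step2:
  fixes e r :: "'a::alternative_ring"
  assumes m: "1 \<le> m" and w1: "lie_poly 1 w = r" and we: "\<forall>j\<ge>2. w j = e"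
    and rc: "commutator r e = r \<or> commutator r e = - r"
    and z: "lie_poly m w = 0"
  shows "r = 0"
proof -
  have c: "1 \<le> k \<Longrightarrow> lie_poly k w = r \<or> lie_poly k w = - r" for k
  proof (induction k)
    case 0 then show ?case by simp
  next
    case (Suc k)
    show ?case
    proof (cases "k = 0")
      case True
      then show ?thesis using w1 by simp
    next
      case False
      then have "lie_poly k w = r \<or> lie_poly k w = - r" using Suc.IH by simp
      moreover have "w (Suc k) = e" using we False by simp
      ultimately show ?thesis using rc by (auto simp: comm_minus_left)
    qed
  qed
  show ?thesis using c[OF m] z by auto
qed

theorem lemma2p2:
  fixes e :: "'a::alternative_ring" and D :: "'a \<Rightarrow> 'a"
  assumes idem: "nontrivial_idempotent e"
    and cond_i: "\<And>a11 a22. a11 \<in> peirce e 1 1 \<Longrightarrow> a22 \<in> peirce e 2 2 \<Longrightarrow>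
        (\<forall>x \<in> peirce e 1 2. commutator (a11 + a22) x = 0) \<Longrightarrow> a11 + a22 \<in> center"
    and cond_ii: "\<And>a11 a22. a11 \<in> peirce e 1 1 \<Longrightarrow> a22 \<in> peirce e 2 2 \<Longrightarrow>
        (\<forall>x \<in> peirce e 2 1. commutator (a11 + a22) x = 0) \<Longrightarrow> a11 + a22 \<in> center"
    and D: "mult_lie_type_derivation D"
    and ij: "i \<in> {1, 2}" "j \<in> {1, 2}" "i \<noteq> j"
    and a: "a11 \<in> peirce e 1 1"
    and b: "b \<in> peirce e i j"
  shows "\<exists>z \<in> center. D (a11 + b) = D a11 + D b + z"
proof -
  have ee: "e * e = e" using idem unfolding nontrivial_idempotent_def by simp
  obtain n where n: "n \<ge> 2" "mult_lie_n_derivation n D"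
    using D unfolding mult_lie_type_derivation_def by blast
  obtain m where m: "2 \<le> m" "LD m D"
  proof (cases "n = 2")
    case True then have "LD 1 D" using LD_from[OF n(2) n(1)] by simp
    then have "LD 2 D" by (rule LD1_LD2)
    then show ?thesis using that[of 2] by simp
  next
    case False then show ?thesis using that[of "n - 1"] LD_from[OF n(2) n(1)] n(1) by simp
  qed
  have m1: "1 \<le> m" using m by simp
  define T where "T = D (a11 + b) - D a11 - D b"
  have a_p: "e * a11 = a11" "a11 * e = a11" using a P11_iff[OF ee] by auto
  have z1: "lie_poly m ((\<lambda>_. e)(0 := a11)) = 0"
    by (rule lie_zero_mono[of 1]) (use a_p m in \<open>simp_all add: commutator_def\<close>)
  have "lie_poly m ((\<lambda>_. e)(0 := T)) = 0" unfolding T_def by (rule LD_key[OF m(2) m1 z1])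
  then have s1: "e * T - (e * T) * e = 0 \<and> T * e - (e * T) * e = 0" by (rule step1[OF ee m1])
  define t11 where "t11 = (e * T) * e"
  define t22 where "t22 = T - e * T - T * e + (e * T) * e"
  have t11p: "t11 \<in> peirce e 1 1" unfolding t11_def peirce_def rmul_e_def lmul_e_def by auto
  have "t22 = (T - e * T) - (T - e * T) * e" unfolding t22_def by (simp add: na_expand algebra_simps)
  hence t22p: "t22 \<in> peirce e 2 2" unfolding peirce_def rmul_e_def lmul_e_def by auto
  have Tdec: "T = t11 + t22" using s1 unfolding t11_def t22_def by (simp add: algebra_simps)
  have t11e: "e * t11 = t11" "t11 * e = t11" using t11p P11_iff[OF ee] by auto
  have t22e: "e * t22 = 0" "t22 * e = 0" using t22p P22_iff[OF ee] by auto
  have Tc: "T \<in> center"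
  proof (cases "i = 1")
    case True then have j: "j = 2" using ij by auto
    have b_p: "e * b = b" "b * e = 0" using b True j P12_iff[OF ee] by auto
    have "\<forall>x \<in> peirce e 2 1. commutator (t11 + t22) x = 0"
    proof
      fix c assume "c \<in> peirce e 2 1"
      then have c_p: "e * c = 0" "c * e = c" using P21_iff[OF ee] by auto
      define y :: "nat \<Rightarrow> 'a" where "y = ((\<lambda>_. e)(1 := c))"
      have bc: "e * (b * c) = b * c \<and> (b * c) * e = b * c \<and> e * (c * b) = 0 \<and> (c * b) * e = 0"
        by (rule prodA[OF b_p c_p])
      have "lie_poly 2 (y(0 := b)) = 0"
        using bc by (simp add: y_def numeral_2_eq_2 commutator_def na_expand)
      hence z2: "lie_poly m (y(0 := b)) = 0" by (rule lie_zero_mono) (use m in simp)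
      have "lie_poly m (y(0 := D (b + a11) - D b - D a11)) = 0" by (rule LD_key[OF m(2) m1 z2])
      moreover have "D (b + a11) - D b - D a11 = T" unfolding T_def by (simp add: add.commute algebra_simps)
      ultimately have zT: "lie_poly m (y(0 := T)) = 0" by simp
      define r where "r = commutator (t11 + t22) c"
      have 1: "t11 * c = 0" by (rule zero_11_21[OF t11e c_p(1)])
      have 2: "c * t22 = 0" by (rule zero_21_22[OF t22e c_p(2)])
      have r_eq: "r = t22 * c - c * t11" unfolding r_def commutator_def using 1 2 by (simp add: na_expand)
      have 3: "e * (t22 * c) = 0 \<and> (t22 * c) * e = t22 * c" by (rule prod_22_21[OF t22e c_p])
      have 4: "e * (c * t11) = 0 \<and> (c * t11) * e = c * t11" by (rule prod_21_11[OF t11e c_p])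
      have "commutator r e = r" using 3 4 unfolding r_eq commutator_def by (simp add: na_expand)
      have "r = 0"
      proof (rule step2[OF m1 _ _ _ zT])
        show "lie_poly 1 (y(0 := T)) = r" unfolding r_def y_def Tdec by simp
        show "\<forall>j\<ge>2. (y(0 := T)) j = e" unfolding y_def by simp
        show "commutator r e = r \<or> commutator r e = - r" using \<open>commutator r e = r\<close> by simp
      qed
      then show "commutator (t11 + t22) c = 0" unfolding r_def .
    qed
    then have "t11 + t22 \<in> center" by (rule cond_ii[OF t11p t22p])
    then show ?thesis using Tdec by simp
  next
    case False then have i2: "i = 2" "j = 1" using ij by auto
    have b_p: "e * b = 0" "b * e = b" using b i2 P21_iff[OF ee] by auto
    have "\<forall>x \<in> peirce e 1 2. commutator (t11 + t22) x = 0"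
    proof
      fix c assume "c \<in> peirce e 1 2"
      then have c_p: "e * c = c" "c * e = 0" using P12_iff[OF ee] by auto
      define y :: "nat \<Rightarrow> 'a" where "y = ((\<lambda>_. e)(1 := c))"
      have bc: "e * (c * b) = c * b \<and> (c * b) * e = c * b \<and> e * (b * c) = 0 \<and> (b * c) * e = 0"
        by (rule prodA[OF c_p b_p])
      have "lie_poly 2 (y(0 := b)) = 0"
        using bc by (simp add: y_def numeral_2_eq_2 commutator_def na_expand)
      hence z2: "lie_poly m (y(0 := b)) = 0" by (rule lie_zero_mono) (use m in simp)
      have "lie_poly m (y(0 := D (b + a11) - D b - D a11)) = 0" by (rule LD_key[OF m(2) m1 z2])
      moreover have "D (b + a11) - D b - D a11 = T" unfolding T_def by (simp add: add.commute algebra_simps)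
      ultimately have zT: "lie_poly m (y(0 := T)) = 0" by simp
      define r where "r = commutator (t11 + t22) c"
      have 1: "t22 * c = 0" by (rule zero_22_12[OF t22e c_p(1)])
      have 2: "c * t11 = 0" by (rule zero_12_11[OF t11e c_p(2)])
      have r_eq: "r = t11 * c - c * t22" unfolding r_def commutator_def using 1 2 by (simp add: na_expand)
      have 3: "e * (t11 * c) = t11 * c \<and> (t11 * c) * e = 0" by (rule prod_11_12[OF t11e c_p])
      have 4: "e * (c * t22) = c * t22 \<and> (c * t22) * e = 0" by (rule prod_12_22[OF t22e c_p])
      have "commutator r e = - r" using 3 4 unfolding r_eq commutator_def by (simp add: na_expand)
      have "r = 0"
      proof (rule step2[OF m1 _ _ _ zT])
        show "lie_poly 1 (y(0 := T)) = r" unfolding r_def y_def Tdec by simp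
        show "\<forall>j\<ge>2. (y(0 := T)) j = e" unfolding y_def by simp
        show "commutator r e = r \<or> commutator r e = - r" using \<open>commutator r e = - r\<close> by simp
      qed
      then show "commutator (t11 + t22) c = 0" unfolding r_def .
    qed
    then have "t11 + t22 \<in> center" by (rule cond_i[OF t11p t22p])
    then show ?thesis using Tdec by simp
  qed
  show ?thesis using Tc by (intro bexI[of _ T]) (simp_all add: T_def algebra_simps)
qed

end
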